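(* Let $q$ be a prime power and $\Gamma\subseteq\mathbb{F}_q^*$ a multiplicative subgroup. Let $h_1,h_2:\mathbb{F}_q\to\mathbb{C}$ be functions supported on $\Gamma$ and let $g:\mathbb{F}_q\to\mathbb{C}$ be an arbitrary function. Then $$\frac1{|\Gamma|}\sum_{\gamma\in\Gamma}\langle\mathrm{T}^g_\Gamma h_1^\gamma,h_2^\gamma\rangle=\sum_{\alpha=1}^{|\Gamma|}c_\alpha(h_1)\overline{c_\alpha(h_2)}\cdot\langle\mathrm{T}^g_\Gamma f_\alpha,f_\alpha\rangle.$$
   Context: $\mathrm{T}^g_\Gamma$ is the matrix indexed by $\Gamma$ with entries $\mathrm{T}^g_\Gamma(x,y)=g(x-y)$ for $x,y\in\Gamma$, and $\langle\mathrm{T}^g_\Gamma a,b\rangle=\sum_{x,y\in\Gamma}g(x-y)a(y)\overline{b(x)}$. For $\gamma\in\mathbb{F}_q^*$, $h^\gamma(x)=h(\gamma x)$. Let $t=|\Gamma|$, $n=(q-1)/t$, $\mathbf g$ a primitive root, $\Gamma=\{\mathbf g^{nl}:0\le l<t\}$; $\chi_\alpha(\mathbf g^{nl})=e^{2\pi i\alpha l/t}$ on $\Gamma$ and $0$ off $\Gamma$, $f_\alpha=|\Gamma|^{-1/2}\chi_\alpha$ ($\alpha\in[t]$), and $c_\alpha(\varphi)=\sum_{x\in\Gamma}\varphi(x)\overline{f_\alpha(x)}$. *)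

theory Defs
  imports "HOL-Analysis.Analysis"
begin

text \<open>The finite field F_q is modelled by a finite field type 'a (q = CARD('a)).\<close>

definition Tform :: "('a::ab_group_add \<Rightarrow> complex) \<Rightarrow> 'a set \<Rightarrow> ('a \<Rightarrow> complex) \<Rightarrow> ('a \<Rightarrow> complex) \<Rightarrow> complex" where
  "Tform g \<Gamma> a b = (\<Sum>x\<in>\<Gamma>. \<Sum>y\<in>\<Gamma>. g (x - y) * a y * cnj (b x))"

definition dil :: "('a::times \<Rightarrow> complex) \<Rightarrow> 'a \<Rightarrow> ('a \<Rightarrow> complex)" where
  "dil h \<gamma> = (\<lambda>x. h (\<gamma> * x))"

definition mult_subgroup :: "'a::field set \<Rightarrow> bool" where
  "mult_subgroup \<Gamma> \<longleftrightarrow> \<Gamma> \<subseteq> - {0} \<and> 1 \<in> \<Gamma> \<and> (\<forall>x\<in>\<Gamma>. \<forall>y\<in>\<Gamma>. x * y \<in> \<Gamma>) \<and> (\<forall>x\<in>\<Gamma>. inverse x \<in> \<Gamma>)"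

definition primitive_root :: "'a::{field,finite} \<Rightarrow> bool" where
  "primitive_root pr \<longleftrightarrow> (\<forall>x. x \<noteq> 0 \<longrightarrow> (\<exists>k::nat. x = pr ^ k))"

definition chi :: "'a::{field,finite} \<Rightarrow> 'a set \<Rightarrow> nat \<Rightarrow> 'a \<Rightarrow> complex" where
  "chi pr \<Gamma> \<alpha> x =
     (if x \<in> \<Gamma> then
        (let t = card \<Gamma>; n = (CARD('a) - 1) div t;
             l = (SOME l::nat. l < t \<and> pr ^ (n * l) = x)
         in exp (2 * of_real pi * \<i> * of_nat \<alpha> * of_nat l / of_nat t))
      else 0)"

definition fchi :: "'a::{field,finite} \<Rightarrow> 'a set \<Rightarrow> nat \<Rightarrow> 'a \<Rightarrow> complex" where
  "fchi pr \<Gamma> \<alpha> x = chi pr \<Gamma> \<alpha> x / of_real (sqrt (real (card \<Gamma>)))"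

definition coef :: "'a::{field,finite} \<Rightarrow> 'a set \<Rightarrow> nat \<Rightarrow> ('a \<Rightarrow> complex) \<Rightarrow> complex" where
  "coef pr \<Gamma> \<alpha> \<phi> = (\<Sum>x\<in>\<Gamma>. \<phi> x * cnj (fchi pr \<Gamma> \<alpha> x))"

end

theory Submission
  imports Defs
begin


lemma pow_order:
  fixes pr :: "'a::{field,finite}"
  assumes prim: "primitive_root pr" and nz: "pr \<noteq> 0"
  defines "N \<equiv> CARD('a) - 1"
  shows "pr ^ N = 1" "\<And>a b. pr ^ a = pr ^ b \<longleftrightarrow> a mod N = b mod N" "N > 0"
proof -
  let ?U = "-{0::'a}"
  have cardU: "card ?U = N" unfolding N_def
    by (simp add: Compl_eq_Diff_UNIV card_Diff_singleton)
  have pnz: "pr ^ k \<noteq> 0" for k using nz by simp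
  have "\<not> inj_on (\<lambda>k. pr ^ k) {0..N}"
  proof
    assume inj: "inj_on (\<lambda>k. pr ^ k) {0..N}"
    have "(\<lambda>k. pr ^ k) ` {0..N} \<subseteq> ?U" using nz by auto
    hence "card ((\<lambda>k. pr ^ k) ` {0..N}) \<le> card ?U" by (intro card_mono) auto
    hence "card ((\<lambda>k. pr ^ k) ` {0..N}) \<le> N" using cardU by simp
    with card_image[OF inj] show False by simp
  qed
  then obtain a b where ab: "a \<le> N" "b \<le> N" "a \<noteq> b" "pr ^ a = pr ^ b"
    unfolding inj_on_def by auto
  define i where "i = min a b"
  define j where "j = max a b"
  have ij: "i \<le> N" "j \<le> N" "i < j" "pr ^ i = pr ^ j"
    using ab unfolding i_def j_def by (auto simp: min_def max_def)
  have "pr ^ j = pr ^ i * pr ^ (j - i)" by (metis ij(3) le_add_diff_inverse less_imp_le power_add)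
  hence "pr ^ i * 1 = pr ^ i * pr ^ (j - i)" using ij(4) by (metis mult_1_right)
  hence ex: "pr ^ (j - i) = 1" using pnz[of i] by (metis mult_left_cancel)
  define m where "m = (LEAST k. 0 < k \<and> pr ^ k = 1)"
  have m: "0 < m" "pr ^ m = 1" using LeastI[of "\<lambda>k. 0 < k \<and> pr ^ k = 1" "j - i"] ex ij
    unfolding m_def by auto
  have mmin: "\<And>k. 0 < k \<Longrightarrow> k < m \<Longrightarrow> pr ^ k \<noteq> 1"
  proof -
    fix k assume "0 < k" "k < m"
    thus "pr ^ k \<noteq> 1" using not_less_Least[of k "\<lambda>k. 0 < k \<and> pr ^ k = 1"] unfolding m_def by auto
  qed
  have red: "pr ^ k = pr ^ (k mod m)" for k
  proof -
    have "pr ^ k = pr ^ (m * (k div m) + k mod m)" by simp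
    also have "\<dots> = (pr ^ m) ^ (k div m) * pr ^ (k mod m)"
      by (simp only: power_add power_mult)
    thus ?thesis using m by simp
  qed
  have injm: "inj_on (\<lambda>k. pr ^ k) {0..<m}"
  proof (rule inj_onI)
    fix a b assume ab: "a \<in> {0..<m}" "b \<in> {0..<m}" "pr ^ a = pr ^ b"
    show "a = b"
    proof (rule ccontr)
      assume "a \<noteq> b"
      then consider "a < b" | "b < a" by linarith
      thus False
      proof cases
        case 1
        have "pr ^ b = pr ^ a * pr ^ (b - a)" by (metis 1 le_add_diff_inverse less_imp_le power_add)
        hence "pr ^ a * 1 = pr ^ a * pr ^ (b - a)" using ab(3) by (metis mult_1_right)
        hence "pr ^ (b - a) = 1" using pnz[of a] by (metis mult_left_cancel)
        moreover have "b - a < m" "0 < b - a" using ab 1 by auto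
        ultimately show False using mmin by blast
      next
        case 2
        have "pr ^ a = pr ^ b * pr ^ (a - b)" by (metis 2 le_add_diff_inverse less_imp_le power_add)
        hence "pr ^ b * 1 = pr ^ b * pr ^ (a - b)" using ab(3) by (metis mult_1_right)
        hence "pr ^ (a - b) = 1" using pnz[of b] by (metis mult_left_cancel)
        moreover have "a - b < m" "0 < a - b" using ab 2 by auto
        ultimately show False using mmin by blast
      qed
    qed
  qed
  have img: "(\<lambda>k. pr ^ k) ` {0..<m} = ?U"
  proof
    show "(\<lambda>k. pr ^ k) ` {0..<m} \<subseteq> ?U" using nz by auto
    show "?U \<subseteq> (\<lambda>k. pr ^ k) ` {0..<m}"
    proof
      fix x assume "x \<in> ?U"
      then obtain k where "x = pr ^ k" using prim unfolding primitive_root_def by auto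
      hence "x = pr ^ (k mod m)" using red by metis
      moreover have "k mod m \<in> {0..<m}" using m by simp
      ultimately show "x \<in> (\<lambda>k. pr ^ k) ` {0..<m}" by blast
    qed
  qed
  have mN: "m = N" using card_image[OF injm] img cardU by simp
  show "pr ^ N = 1" using m mN by simp
  show "N > 0" using m mN by simp
  fix a b
  show "pr ^ a = pr ^ b \<longleftrightarrow> a mod N = b mod N"
  proof
    assume "pr ^ a = pr ^ b"
    hence "pr ^ (a mod m) = pr ^ (b mod m)" using red by metis
    thus "a mod N = b mod N" using injm m mN unfolding inj_on_def by simp
  next
    assume "a mod N = b mod N" thus "pr ^ a = pr ^ b" using red mN by metis
  qed
qed

lemma gamma_struct:
  fixes \<Gamma> :: "'a::{field,finite} set" and pr :: 'a
  assumes sg: "mult_subgroup \<Gamma>" and prim: "primitive_root pr"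
  defines "t \<equiv> card \<Gamma>" and "n \<equiv> (CARD('a) - 1) div card \<Gamma>"
  shows "0 < t" "inj_on (\<lambda>l. pr ^ (n * l)) {0..<t}" "(\<lambda>l. pr ^ (n * l)) ` {0..<t} = \<Gamma>"
    "\<And>l m. l < t \<Longrightarrow> m < t \<Longrightarrow> pr ^ (n * ((l + m) mod t)) = pr ^ (n * l) * pr ^ (n * m)"
proof -
  have fin: "finite \<Gamma>" by simp
  have one: "1 \<in> \<Gamma>" and nz0: "\<And>x. x \<in> \<Gamma> \<Longrightarrow> x \<noteq> 0"
    and cl: "\<And>x y. x \<in> \<Gamma> \<Longrightarrow> y \<in> \<Gamma> \<Longrightarrow> x * y \<in> \<Gamma>"
    using sg unfolding mult_subgroup_def by auto
  show tpos: "0 < t" unfolding t_def using one fin by (auto simp: card_gt_0_iff)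
  have "(0 < t \<and> inj_on (\<lambda>l. pr ^ (n * l)) {0..<t} \<and> (\<lambda>l. pr ^ (n * l)) ` {0..<t} = \<Gamma>) \<and>
    (\<forall>l m. l < t \<longrightarrow> m < t \<longrightarrow> pr ^ (n * ((l + m) mod t)) = pr ^ (n * l) * pr ^ (n * m))"
  proof (cases "pr = 0")
    case True
    have "\<Gamma> = {1}"
    proof
      show "\<Gamma> \<subseteq> {1}"
      proof
        fix x assume "x \<in> \<Gamma>"
        hence "x \<noteq> 0" using nz0 by auto
        then obtain k where "x = pr ^ k" using prim unfolding primitive_root_def by auto
        with \<open>x \<noteq> 0\<close> True show "x \<in> {1}" by (cases k) auto
      qed
      show "{1} \<subseteq> \<Gamma>" using one by auto
    qed
    hence t1: "t = 1" unfolding t_def by simp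
    show ?thesis using t1 \<open>\<Gamma> = {1}\<close> by auto
  next
    case False
    define N where "N = CARD('a) - 1"
    have pN: "pr ^ N = 1" and pe: "\<And>a b. pr ^ a = pr ^ b \<longleftrightarrow> a mod N = b mod N" and Npos: "N > 0"
      using pow_order[OF prim False] unfolding N_def by auto
    have xt: "x ^ t = 1" if x: "x \<in> \<Gamma>" for x
    proof -
      have xnz: "x \<noteq> 0" using nz0 x by auto
      have inj: "inj_on ((*) x) \<Gamma>" using xnz by (auto simp: inj_on_def)
      have sub: "(*) x ` \<Gamma> \<subseteq> \<Gamma>" using cl x by auto
      have im: "(*) x ` \<Gamma> = \<Gamma>"
        using card_subset_eq[OF fin sub] card_image[OF inj] by simp
      have "(\<Prod>y\<in>\<Gamma>. y) = (\<Prod>y\<in>(*) x ` \<Gamma>. y)" using im by simp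
      also have "\<dots> = (\<Prod>y\<in>\<Gamma>. x * y)" using prod.reindex[OF inj] by simp
      also have "\<dots> = x ^ t * (\<Prod>y\<in>\<Gamma>. y)" unfolding t_def by (simp add: prod.distrib)
      finally have "1 * (\<Prod>y\<in>\<Gamma>. y) = x ^ t * (\<Prod>y\<in>\<Gamma>. y)" by simp
      moreover have "(\<Prod>y\<in>\<Gamma>. y) \<noteq> 0" using nz0 fin by simp
      ultimately show ?thesis by (metis mult_right_cancel)
    qed
    define d where "d = gcd t N"
    define N' where "N' = N div d"
    define t' where "t' = t div d"
    have dpos: "d > 0" using tpos unfolding d_def by simp
    have cop: "coprime N' t'" unfolding N'_def t'_def d_def using div_gcd_coprime[of N t] Npos
      by (simp add: gcd.commute)
    have NN: "N = N' * d" unfolding N'_def d_def by simp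
    have tt: "t = t' * d" unfolding t'_def d_def by simp
    define D where "D = (\<lambda>l. pr ^ (N' * l)) ` {0..<d}"
    have GD: "\<Gamma> \<subseteq> D"
    proof
      fix x assume x: "x \<in> \<Gamma>"
      then obtain k where k: "x = pr ^ k" using prim nz0 unfolding primitive_root_def by blast
      have "pr ^ (k * t) = pr ^ 0" using xt[OF x] k by (simp add: power_mult)
      hence "(k * t) mod N = 0" using pe[of "k * t" 0] by simp
      hence "N' * d dvd k * t' * d" using NN tt by (simp add: mod_eq_0_iff_dvd mult.assoc)
      hence "N' dvd k * t'" using dpos by simp
      hence "N' dvd k" using cop by (simp add: coprime_dvd_mult_left_iff)
      then obtain j where j: "k = N' * j" by auto
      have "(N' * j) mod N = (N' * (j mod d)) mod N"
        unfolding NN by (simp add: mod_mult_mult1)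
      hence "x = pr ^ (N' * (j mod d))" using k j pe by simp
      thus "x \<in> D" unfolding D_def using dpos by auto
    qed
    have "t \<le> card D" unfolding t_def using GD by (intro card_mono) (auto simp: D_def)
    also have "card D \<le> d" unfolding D_def using card_image_le[of "{0..<d}"] by simp
    finally have "t \<le> d" .
    moreover have "d \<le> t" unfolding d_def using tpos by (simp add: gcd_le1_nat)
    ultimately have dt: "d = t" by simp
    have nN: "n = N'" unfolding n_def N'_def N_def dt t_def by simp
    have Nnt: "N = n * t" using NN nN dt by simp
    have npos: "n > 0" using Nnt Npos by simp
    have GD2: "\<Gamma> = D"
      by (rule card_seteq) (use GD \<open>card D \<le> d\<close> dt t_def in \<open>auto simp: D_def\<close>)
    have inj: "inj_on (\<lambda>l. pr ^ (n * l)) {0..<t}"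
    proof (rule inj_onI)
      fix l m assume lm: "l \<in> {0..<t}" "m \<in> {0..<t}" "pr ^ (n * l) = pr ^ (n * m)"
      hence "(n * l) mod (n * t) = (n * m) mod (n * t)" using pe Nnt by simp
      hence "n * (l mod t) = n * (m mod t)" by (simp add: mod_mult_mult1)
      thus "l = m" using lm npos by simp
    qed
    have add: "pr ^ (n * ((l + m) mod t)) = pr ^ (n * l) * pr ^ (n * m)" for l m
    proof -
      have "pr ^ (n * l) * pr ^ (n * m) = pr ^ (n * (l + m))" by (simp add: power_add distrib_left)
      moreover have "(n * (l + m)) mod N = (n * ((l + m) mod t)) mod N"
        unfolding Nnt by (simp add: mod_mult_mult1)
      ultimately show ?thesis using pe by metis
    qed
    show ?thesis using inj add GD2 tpos unfolding D_def nN[symmetric] dt by auto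
  qed
  thus "inj_on (\<lambda>l. pr ^ (n * l)) {0..<t}" "(\<lambda>l. pr ^ (n * l)) ` {0..<t} = \<Gamma>"
    "\<And>l m. l < t \<Longrightarrow> m < t \<Longrightarrow> pr ^ (n * ((l + m) mod t)) = pr ^ (n * l) * pr ^ (n * m)"
    by auto
qed



lemma geo_sum:
  fixes z :: complex
  assumes "z ^ t = 1" "t > 0"
  shows "(\<Sum>l<t. z ^ l) = (if z = 1 then of_nat t else 0)"
    "(\<Sum>l\<in>{1..t}. z ^ l) = (if z = 1 then of_nat t else 0)"
proof -
  show a: "(\<Sum>l<t. z ^ l) = (if z = 1 then of_nat t else 0)"
    using assms by (simp add: sum_gp_strict)
  have "(\<Sum>l\<in>{1..t}. z ^ l) = (\<Sum>l<t. z ^ Suc l)"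
    using sum.atLeast1_atMost_eq[of "\<lambda>l. z ^ l" t] by simp
  also have "\<dots> = z * (\<Sum>l<t. z ^ l)" by (simp add: sum_distrib_left)
  finally show "(\<Sum>l\<in>{1..t}. z ^ l) = (if z = 1 then of_nat t else 0)" using a by simp
qed

lemma omega_facts:
  fixes t :: nat
  assumes tpos: "t > 0"
  defines "\<omega> \<equiv> exp (2 * of_real pi * \<i> / of_nat t)"
  shows "\<omega> ^ t = 1" "cnj \<omega> = inverse \<omega>" "\<omega> \<noteq> 0"
    "\<And>k. 0 < k \<Longrightarrow> k < t \<Longrightarrow> \<omega> ^ k \<noteq> 1"
    "\<And>k. \<omega> ^ k = \<omega> ^ (k mod t)"
    "\<And>a b. a \<noteq> b \<Longrightarrow> a < b + t \<Longrightarrow> b < a + t \<Longrightarrow> \<omega> ^ a \<noteq> \<omega> ^ b"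
proof -
  have ex: "\<omega> ^ k = exp (of_nat k * (2 * of_real pi * \<i> / of_nat t))" for k
    unfolding \<omega>_def by (rule exp_of_nat_mult[symmetric])
  show wt: "\<omega> ^ t = 1" unfolding ex using tpos by simp
  show "cnj \<omega> = inverse \<omega>" unfolding \<omega>_def by (simp add: exp_cnj exp_minus[symmetric])
  show wnz: "\<omega> \<noteq> 0" unfolding \<omega>_def by simp
  show ne1: "\<omega> ^ k \<noteq> 1" if k: "0 < k" "k < t" for k
  proof
    assume "\<omega> ^ k = 1"
    hence "exp (of_nat k * (2 * of_real pi * \<i> / of_nat t)) = 1" using ex by simp
    then obtain m :: int where m: "real k * (2 * pi) / real t = 2 * of_int m * pi"
      unfolding exp_eq_1 by auto
    hence "(2 * pi) * (real k / real t) = (2 * pi) * of_int m" by (simp add: field_simps)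
    hence "real k / real t = of_int m" using pi_gt_zero by (metis mult_left_cancel zero_neq_numeral mult_eq_0_iff pi_neq_zero)
    moreover have "0 < real k / real t" "real k / real t < 1" using k by auto
    ultimately have "0 < (of_int m :: real)" "(of_int m :: real) < 1" by auto
    hence "0 < m" "m < 1" by simp_all
    thus False by simp
  qed
  show red: "\<omega> ^ k = \<omega> ^ (k mod t)" for k
  proof -
    have "\<omega> ^ k = \<omega> ^ (t * (k div t) + k mod t)" by simp
    also have "\<dots> = (\<omega> ^ t) ^ (k div t) * \<omega> ^ (k mod t)" by (simp only: power_add power_mult)
    finally show ?thesis using wt by simp
  qed
  show "\<omega> ^ a \<noteq> \<omega> ^ b" if ab: "a \<noteq> b" "a < b + t" "b < a + t" for a b
  proof -
    have gen: "\<omega> ^ x \<noteq> \<omega> ^ y" if "x < y" "y < x + t" for x y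
    proof
      assume eq: "\<omega> ^ x = \<omega> ^ y"
      have "\<omega> ^ y = \<omega> ^ x * \<omega> ^ (y - x)" by (metis that(1) le_add_diff_inverse less_imp_le power_add)
      hence "\<omega> ^ x * 1 = \<omega> ^ x * \<omega> ^ (y - x)" using eq by (metis mult_1_right)
      hence "\<omega> ^ (y - x) = 1" using wnz by (metis mult_left_cancel power_not_zero)
      moreover have "0 < y - x" "y - x < t" using that by auto
      ultimately show False using ne1 by blast
    qed
    show ?thesis using ab gen[of a b] gen[of b a] by (cases "a < b") auto
  qed
qed



lemma chi_facts:
  fixes \<Gamma> :: "'a::{field,finite} set" and pr :: 'a
  assumes sg: "mult_subgroup \<Gamma>" and prim: "primitive_root pr"
  shows "\<And>x y \<alpha>. x \<in> \<Gamma> \<Longrightarrow> y \<in> \<Gamma> \<Longrightarrow> chi pr \<Gamma> \<alpha> (x * y) = chi pr \<Gamma> \<alpha> x * chi pr \<Gamma> \<alpha> y"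
    "\<And>\<alpha> \<beta>. \<alpha> \<in> {1..card \<Gamma>} \<Longrightarrow> \<beta> \<in> {1..card \<Gamma>} \<Longrightarrow>
       (\<Sum>\<gamma>\<in>\<Gamma>. chi pr \<Gamma> \<alpha> \<gamma> * cnj (chi pr \<Gamma> \<beta> \<gamma>)) = (if \<alpha> = \<beta> then of_nat (card \<Gamma>) else 0)"
    "\<And>x y. x \<in> \<Gamma> \<Longrightarrow> y \<in> \<Gamma> \<Longrightarrow>
       (\<Sum>\<alpha>\<in>{1..card \<Gamma>}. chi pr \<Gamma> \<alpha> x * cnj (chi pr \<Gamma> \<alpha> y)) = (if x = y then of_nat (card \<Gamma>) else 0)"
proof -
  define t where "t = card \<Gamma>"
  define n where "n = (CARD('a) - 1) div card \<Gamma>"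
  define \<omega> where "\<omega> = exp (2 * of_real pi * \<i> / of_nat t)"
  note gs = gamma_struct[OF sg prim, folded t_def n_def]
  note om = omega_facts[OF gs(1), folded \<omega>_def]
  define L where "L x = (SOME l. l < t \<and> pr ^ (n * l) = x)" for x
  have Lp: "L x < t \<and> pr ^ (n * L x) = x" if "x \<in> \<Gamma>" for x
  proof -
    have "\<exists>l. l < t \<and> pr ^ (n * l) = x" using gs(3) that by force
    thus ?thesis unfolding L_def by (rule someI_ex)
  qed
  have Le: "L (pr ^ (n * l)) = l" if "l < t" for l
  proof -
    have "pr ^ (n * l) \<in> \<Gamma>" using gs(3) that by force
    hence "L (pr ^ (n * l)) < t" "pr ^ (n * L (pr ^ (n * l))) = pr ^ (n * l)" using Lp by auto
    thus ?thesis using gs(2) that unfolding inj_on_def by auto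
  qed
  have chi_eq: "chi pr \<Gamma> \<alpha> x = \<omega> ^ (\<alpha> * L x)" if "x \<in> \<Gamma>" for x \<alpha>
  proof -
    have "chi pr \<Gamma> \<alpha> x = exp (2 * of_real pi * \<i> * of_nat \<alpha> * of_nat (L x) / of_nat t)"
      unfolding chi_def Let_def L_def t_def n_def using that by simp
    also have "\<dots> = exp (of_nat (\<alpha> * L x) * (2 * of_real pi * \<i> / of_nat t))"
      by (simp add: algebra_simps)
    also have "\<dots> = \<omega> ^ (\<alpha> * L x)" unfolding \<omega>_def by (rule exp_of_nat_mult)
    finally show ?thesis .
  qed
  have cnjw: "cnj (\<omega> ^ k) = inverse \<omega> ^ k" for k
    using om(2) by (simp add: power_inverse)
  have prodw: "\<omega> ^ (a * l) * cnj (\<omega> ^ (b * l)) = (\<omega> ^ a * inverse \<omega> ^ b) ^ l" for a b l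
    unfolding cnjw by (simp add: power_mult power_mult_distrib)
  have zt: "(\<omega> ^ a * inverse \<omega> ^ b) ^ t = 1" for a b
  proof -
    have "(\<omega> ^ a * inverse \<omega> ^ b) ^ t = (\<omega> ^ t) ^ a * inverse ((\<omega> ^ t) ^ b)"
      by (simp add: power_mult_distrib power_inverse flip: power_mult) (simp add: mult.commute)
    thus ?thesis using om(1) by simp
  qed
  have z1: "(\<omega> ^ a * inverse \<omega> ^ b = 1) \<longleftrightarrow> \<omega> ^ a = \<omega> ^ b" for a b
    using om(3) by (simp add: power_inverse field_simps)
  show "chi pr \<Gamma> \<alpha> (x * y) = chi pr \<Gamma> \<alpha> x * chi pr \<Gamma> \<alpha> y" if xy: "x \<in> \<Gamma>" "y \<in> \<Gamma>" for x y \<alpha>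
  proof -
    have xyG: "x * y \<in> \<Gamma>" using sg xy unfolding mult_subgroup_def by auto
    have "pr ^ (n * ((L x + L y) mod t)) = x * y" using gs(4)[of "L x" "L y"] Lp[OF xy(1)] Lp[OF xy(2)] by simp
    hence Lxy: "L (x * y) = (L x + L y) mod t" using Le[of "(L x + L y) mod t"] gs(1) by simp
    have "\<omega> ^ (\<alpha> * L (x * y)) = \<omega> ^ ((\<alpha> * ((L x + L y) mod t)) mod t)" using om(5) Lxy by metis
    also have "\<dots> = \<omega> ^ ((\<alpha> * (L x + L y)) mod t)" by (simp add: mod_mult_right_eq)
    also have "\<dots> = \<omega> ^ (\<alpha> * (L x + L y))" using om(5) by metis
    also have "\<dots> = \<omega> ^ (\<alpha> * L x) * \<omega> ^ (\<alpha> * L y)" by (simp add: distrib_left power_add)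
    finally show ?thesis using chi_eq xy xyG by simp
  qed
  show "(\<Sum>\<gamma>\<in>\<Gamma>. chi pr \<Gamma> \<alpha> \<gamma> * cnj (chi pr \<Gamma> \<beta> \<gamma>)) = (if \<alpha> = \<beta> then of_nat (card \<Gamma>) else 0)"
    if ab: "\<alpha> \<in> {1..card \<Gamma>}" "\<beta> \<in> {1..card \<Gamma>}" for \<alpha> \<beta>
  proof -
    have "(\<Sum>\<gamma>\<in>\<Gamma>. chi pr \<Gamma> \<alpha> \<gamma> * cnj (chi pr \<Gamma> \<beta> \<gamma>))
        = (\<Sum>l\<in>{0..<t}. chi pr \<Gamma> \<alpha> (pr ^ (n * l)) * cnj (chi pr \<Gamma> \<beta> (pr ^ (n * l))))"
      using sum.reindex[OF gs(2), of "\<lambda>\<gamma>. chi pr \<Gamma> \<alpha> \<gamma> * cnj (chi pr \<Gamma> \<beta> \<gamma>)"] gs(3) by simp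
    also have "\<dots> = (\<Sum>l<t. (\<omega> ^ \<alpha> * inverse \<omega> ^ \<beta>) ^ l)"
    proof (rule sum.cong)
      fix l assume l: "l \<in> {..<t}"
      have "pr ^ (n * l) \<in> \<Gamma>" using gs(3) l by force
      thus "chi pr \<Gamma> \<alpha> (pr ^ (n * l)) * cnj (chi pr \<Gamma> \<beta> (pr ^ (n * l))) = (\<omega> ^ \<alpha> * inverse \<omega> ^ \<beta>) ^ l"
        using chi_eq Le l prodw by simp
    qed (auto)
    also have "\<dots> = (if \<alpha> = \<beta> then of_nat t else 0)"
    proof -
      have "\<omega> ^ \<alpha> = \<omega> ^ \<beta> \<longleftrightarrow> \<alpha> = \<beta>" using om(6)[of \<alpha> \<beta>] ab gs(1) unfolding t_def by auto
      thus ?thesis using geo_sum(1)[OF zt gs(1)] z1 by simp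
    qed
    finally show ?thesis unfolding t_def .
  qed
  show "(\<Sum>\<alpha>\<in>{1..card \<Gamma>}. chi pr \<Gamma> \<alpha> x * cnj (chi pr \<Gamma> \<alpha> y)) = (if x = y then of_nat (card \<Gamma>) else 0)"
    if xy: "x \<in> \<Gamma>" "y \<in> \<Gamma>" for x y
  proof -
    have "(\<Sum>\<alpha>\<in>{1..card \<Gamma>}. chi pr \<Gamma> \<alpha> x * cnj (chi pr \<Gamma> \<alpha> y))
        = (\<Sum>\<alpha>\<in>{1..t}. (\<omega> ^ L x * inverse \<omega> ^ L y) ^ \<alpha>)"
      unfolding t_def
    proof (rule sum.cong[OF refl])
      fix \<alpha> :: nat
      have e1: "chi pr \<Gamma> \<alpha> x = \<omega> ^ (L x * \<alpha>)" using chi_eq[OF xy(1)] by (simp add: mult.commute)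
      have e2: "chi pr \<Gamma> \<alpha> y = \<omega> ^ (L y * \<alpha>)" using chi_eq[OF xy(2)] by (simp add: mult.commute)
      show "chi pr \<Gamma> \<alpha> x * cnj (chi pr \<Gamma> \<alpha> y) = (\<omega> ^ L x * inverse \<omega> ^ L y) ^ \<alpha>"
        unfolding e1 e2 prodw ..
    qed
    also have "\<dots> = (if x = y then of_nat t else 0)"
    proof -
      have i1: "L x = L y \<longleftrightarrow> x = y"
      proof
        assume "L x = L y" hence "pr ^ (n * L x) = pr ^ (n * L y)" by simp
        thus "x = y" using Lp[OF xy(1)] Lp[OF xy(2)] by simp
      qed simp
      have lx: "L x < t" and ly: "L y < t" using Lp[OF xy(1)] Lp[OF xy(2)] by blast+
      hence "L x < L y + t" "L y < L x + t" by linarith+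
      hence "\<omega> ^ L x = \<omega> ^ L y \<longleftrightarrow> L x = L y" using om(6)[of "L x" "L y"] by (cases "L x = L y") simp_all
      hence "\<omega> ^ L x = \<omega> ^ L y \<longleftrightarrow> x = y" using i1 by simp
      thus ?thesis using geo_sum(2)[OF zt gs(1)] z1 by simp
    qed
    finally show ?thesis unfolding t_def .
  qed
qed



lemma rearr:
  fixes g :: "'x \<Rightarrow> 'x \<Rightarrow> complex" and a b :: "'i \<Rightarrow> complex" and u :: "'i \<Rightarrow> 'g \<Rightarrow> complex"
    and v :: "'i \<Rightarrow> 'x \<Rightarrow> complex"
  shows "(\<Sum>\<gamma>\<in>G. \<Sum>x\<in>X. \<Sum>y\<in>X. g x y * (\<Sum>\<alpha>\<in>I. a \<alpha> * u \<alpha> \<gamma> * v \<alpha> y) * cnj (\<Sum>\<beta>\<in>I. b \<beta> * u \<beta> \<gamma> * v \<beta> x))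
   = (\<Sum>\<alpha>\<in>I. \<Sum>\<beta>\<in>I. a \<alpha> * cnj (b \<beta>) * (\<Sum>\<gamma>\<in>G. u \<alpha> \<gamma> * cnj (u \<beta> \<gamma>)) * (\<Sum>x\<in>X. \<Sum>y\<in>X. g x y * v \<alpha> y * cnj (v \<beta> x)))"
proof -
  define F where "F \<gamma> x y \<alpha> \<beta> = a \<alpha> * cnj (b \<beta>) * (u \<alpha> \<gamma> * cnj (u \<beta> \<gamma>)) * (g x y * v \<alpha> y * cnj (v \<beta> x))" for \<gamma> x y \<alpha> \<beta>
  have "lhs": "(\<Sum>\<gamma>\<in>G. \<Sum>x\<in>X. \<Sum>y\<in>X. g x y * (\<Sum>\<alpha>\<in>I. a \<alpha> * u \<alpha> \<gamma> * v \<alpha> y) * cnj (\<Sum>\<beta>\<in>I. b \<beta> * u \<beta> \<gamma> * v \<beta> x))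
     = (\<Sum>\<gamma>\<in>G. \<Sum>x\<in>X. \<Sum>y\<in>X. \<Sum>\<alpha>\<in>I. \<Sum>\<beta>\<in>I. F \<gamma> x y \<alpha> \<beta>)"
    unfolding F_def by (simp add: cnj_sum sum_distrib_left sum_distrib_right mult_ac)
  have rhs: "(\<Sum>\<alpha>\<in>I. \<Sum>\<beta>\<in>I. a \<alpha> * cnj (b \<beta>) * (\<Sum>\<gamma>\<in>G. u \<alpha> \<gamma> * cnj (u \<beta> \<gamma>)) * (\<Sum>x\<in>X. \<Sum>y\<in>X. g x y * v \<alpha> y * cnj (v \<beta> x)))
     = (\<Sum>\<alpha>\<in>I. \<Sum>\<beta>\<in>I. \<Sum>x\<in>X. \<Sum>y\<in>X. \<Sum>\<gamma>\<in>G. F \<gamma> x y \<alpha> \<beta>)"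
    unfolding F_def by (simp add: sum_distrib_left sum_distrib_right)
  have sw: "(\<Sum>\<gamma>\<in>G. \<Sum>x\<in>X. \<Sum>y\<in>X. \<Sum>\<alpha>\<in>I. \<Sum>\<beta>\<in>I. F \<gamma> x y \<alpha> \<beta>)
     = (\<Sum>\<alpha>\<in>I. \<Sum>\<beta>\<in>I. \<Sum>x\<in>X. \<Sum>y\<in>X. \<Sum>\<gamma>\<in>G. F \<gamma> x y \<alpha> \<beta>)"
  proof -
    have s4: "(\<Sum>\<gamma>\<in>G. \<Sum>x\<in>X. \<Sum>y\<in>X. H \<gamma> x y) = (\<Sum>x\<in>X. \<Sum>y\<in>X. \<Sum>\<gamma>\<in>G. H \<gamma> x y)" for H :: "_ \<Rightarrow> _ \<Rightarrow> _ \<Rightarrow> complex"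
      by (subst sum.swap) (simp add: sum.swap[of _ G])
    have s1: "(\<Sum>y\<in>X. \<Sum>\<alpha>\<in>I. \<Sum>\<beta>\<in>I. F \<gamma> x y \<alpha> \<beta>) = (\<Sum>\<alpha>\<in>I. \<Sum>\<beta>\<in>I. \<Sum>y\<in>X. F \<gamma> x y \<alpha> \<beta>)" for \<gamma> x
      by (subst sum.swap) (simp add: sum.swap[of _ X])
    have s2: "(\<Sum>x\<in>X. \<Sum>\<alpha>\<in>I. \<Sum>\<beta>\<in>I. H x \<alpha> \<beta>) = (\<Sum>\<alpha>\<in>I. \<Sum>\<beta>\<in>I. \<Sum>x\<in>X. H x \<alpha> \<beta>)" for H :: "_ \<Rightarrow> _ \<Rightarrow> _ \<Rightarrow> complex"
      by (subst sum.swap) (simp add: sum.swap[of _ X])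
    have s3: "(\<Sum>x\<in>G. \<Sum>\<alpha>\<in>I. \<Sum>\<beta>\<in>I. H x \<alpha> \<beta>) = (\<Sum>\<alpha>\<in>I. \<Sum>\<beta>\<in>I. \<Sum>x\<in>G. H x \<alpha> \<beta>)" for H :: "_ \<Rightarrow> _ \<Rightarrow> _ \<Rightarrow> complex"
      by (subst sum.swap) (simp add: sum.swap[of _ G])
    show ?thesis unfolding s1 s2 s3 s4 ..
  qed
  show ?thesis unfolding lhs rhs sw ..
qed



lemma expand:
  fixes \<Gamma> :: "'a::{field,finite} set" and pr :: 'a and h :: "'a \<Rightarrow> complex"
  assumes sg: "mult_subgroup \<Gamma>" and prim: "primitive_root pr" and z: "z \<in> \<Gamma>"
  shows "h z = (\<Sum>\<alpha>\<in>{1..card \<Gamma>}. coef pr \<Gamma> \<alpha> h * fchi pr \<Gamma> \<alpha> z)"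
proof -
  define t where "t = card \<Gamma>"
  define s where "s = complex_of_real (sqrt (real t))"
  note cf = chi_facts[OF sg prim]
  have tpos: "t > 0" using gamma_struct(1)[OF sg prim] unfolding t_def .
  have sq: "sqrt (real t) * sqrt (real t) = real t" by simp
  have ss: "s * s = of_nat t" unfolding s_def of_real_mult[symmetric] sq by simp
  have snz: "s \<noteq> 0" unfolding s_def using tpos by simp
  have cs: "cnj s = s" unfolding s_def by simp
  have "(\<Sum>\<alpha>\<in>{1..t}. coef pr \<Gamma> \<alpha> h * fchi pr \<Gamma> \<alpha> z)
      = (\<Sum>\<alpha>\<in>{1..t}. \<Sum>x\<in>\<Gamma>. h x * (chi pr \<Gamma> \<alpha> z * cnj (chi pr \<Gamma> \<alpha> x)) / (s * s))"
    unfolding coef_def fchi_def t_def[symmetric] s_def[symmetric]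
    apply (intro sum.cong refl)
    apply (simp add: sum_distrib_left sum_distrib_right sum_divide_distrib cs)
    apply (intro sum.cong refl)
    using snz apply (simp add: field_simps)
    done
  also have "\<dots> = (\<Sum>x\<in>\<Gamma>. h x * (\<Sum>\<alpha>\<in>{1..t}. chi pr \<Gamma> \<alpha> z * cnj (chi pr \<Gamma> \<alpha> x)) / (s * s))"
    by (subst sum.swap) (simp add: sum_distrib_left sum_divide_distrib)
  also have "\<dots> = (\<Sum>x\<in>\<Gamma>. h x * (if z = x then of_nat t else 0) / (s * s))"
    using cf(3)[OF z] unfolding t_def by (intro sum.cong refl) simp
  also have "\<dots> = h z * of_nat t / (s * s)"
  proof -
    have "(\<Sum>x\<in>\<Gamma>. h x * (if z = x then of_nat t else 0) / (s * s))
        = (\<Sum>x\<in>\<Gamma>. if z = x then h z * of_nat t / (s * s) else 0)"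
      by (intro sum.cong refl) auto
    thus ?thesis using z by simp
  qed
  also have "\<dots> = h z" using ss tpos by simp
  finally show ?thesis unfolding t_def by simp
qed

theorem lemma8:
  fixes \<Gamma> :: "'a::{field,finite} set"
    and pr :: 'a
    and h1 h2 g :: "'a \<Rightarrow> complex"
  assumes "mult_subgroup \<Gamma>"
    and "primitive_root pr"
    and "\<forall>x. x \<notin> \<Gamma> \<longrightarrow> h1 x = 0"
    and "\<forall>x. x \<notin> \<Gamma> \<longrightarrow> h2 x = 0"
  shows "(1 / of_nat (card \<Gamma>)) * (\<Sum>\<gamma>\<in>\<Gamma>. Tform g \<Gamma> (dil h1 \<gamma>) (dil h2 \<gamma>))
       = (\<Sum>\<alpha>=1..card \<Gamma>. coef pr \<Gamma> \<alpha> h1 * cnj (coef pr \<Gamma> \<alpha> h2) * Tform g \<Gamma> (fchi pr \<Gamma> \<alpha>) (fchi pr \<Gamma> \<alpha>))"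
proof -
  note sg = assms(1) and prim = assms(2)
  define t where "t = card \<Gamma>"
  define I where "I = {1..t}"
  define A where "A \<alpha> = coef pr \<Gamma> \<alpha> h1" for \<alpha>
  define B where "B \<alpha> = coef pr \<Gamma> \<alpha> h2" for \<alpha>
  define c where "c \<alpha> x = chi pr \<Gamma> \<alpha> x" for \<alpha> x
  define f where "f \<alpha> x = fchi pr \<Gamma> \<alpha> x" for \<alpha> x
  define T where "T \<alpha> \<beta> = (\<Sum>x\<in>\<Gamma>. \<Sum>y\<in>\<Gamma>. g (x - y) * f \<alpha> y * cnj (f \<beta> x))" for \<alpha> \<beta>
  note cf = chi_facts[OF sg prim]
  have tpos: "t > 0" using gamma_struct(1)[OF sg prim] unfolding t_def .
  have cl: "\<And>x y. x \<in> \<Gamma> \<Longrightarrow> y \<in> \<Gamma> \<Longrightarrow> x * y \<in> \<Gamma>" using sg unfolding mult_subgroup_def by auto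
  have dexp: "h (\<gamma> * y) = (\<Sum>\<alpha>\<in>I. coef pr \<Gamma> \<alpha> h * c \<alpha> \<gamma> * f \<alpha> y)" if "\<gamma> \<in> \<Gamma>" "y \<in> \<Gamma>" for h \<gamma> y
  proof -
    have "h (\<gamma> * y) = (\<Sum>\<alpha>\<in>I. coef pr \<Gamma> \<alpha> h * fchi pr \<Gamma> \<alpha> (\<gamma> * y))"
      using expand[OF sg prim cl[OF that]] unfolding I_def t_def .
    also have "\<dots> = (\<Sum>\<alpha>\<in>I. coef pr \<Gamma> \<alpha> h * c \<alpha> \<gamma> * f \<alpha> y)"
      unfolding f_def c_def fchi_def using cf(1)[OF that] by (simp add: mult_ac)
    finally show ?thesis .
  qed
  have "(\<Sum>\<gamma>\<in>\<Gamma>. Tform g \<Gamma> (dil h1 \<gamma>) (dil h2 \<gamma>))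
     = (\<Sum>\<gamma>\<in>\<Gamma>. \<Sum>x\<in>\<Gamma>. \<Sum>y\<in>\<Gamma>. g (x - y) * (\<Sum>\<alpha>\<in>I. A \<alpha> * c \<alpha> \<gamma> * f \<alpha> y) * cnj (\<Sum>\<beta>\<in>I. B \<beta> * c \<beta> \<gamma> * f \<beta> x))"
    unfolding Tform_def dil_def A_def B_def using dexp by (intro sum.cong refl) simp
  also have "\<dots> = (\<Sum>\<alpha>\<in>I. \<Sum>\<beta>\<in>I. A \<alpha> * cnj (B \<beta>) * (\<Sum>\<gamma>\<in>\<Gamma>. c \<alpha> \<gamma> * cnj (c \<beta> \<gamma>)) * T \<alpha> \<beta>)"
    unfolding T_def by (rule rearr)
  also have "\<dots> = (\<Sum>\<alpha>\<in>I. \<Sum>\<beta>\<in>I. A \<alpha> * cnj (B \<beta>) * (if \<alpha> = \<beta> then of_nat t else 0) * T \<alpha> \<beta>)"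
    unfolding c_def using cf(2) unfolding I_def t_def by (intro sum.cong refl) simp
  also have "\<dots> = (\<Sum>\<alpha>\<in>I. A \<alpha> * cnj (B \<alpha>) * of_nat t * T \<alpha> \<alpha>)"
  proof (intro sum.cong refl)
    fix \<alpha> assume "\<alpha> \<in> I"
    have "(\<Sum>\<beta>\<in>I. A \<alpha> * cnj (B \<beta>) * (if \<alpha> = \<beta> then of_nat t else 0) * T \<alpha> \<beta>)
        = (\<Sum>\<beta>\<in>I. if \<alpha> = \<beta> then A \<alpha> * cnj (B \<alpha>) * of_nat t * T \<alpha> \<alpha> else 0)"
      by (intro sum.cong refl) auto
    thus "(\<Sum>\<beta>\<in>I. A \<alpha> * cnj (B \<beta>) * (if \<alpha> = \<beta> then of_nat t else 0) * T \<alpha> \<beta>)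
        = A \<alpha> * cnj (B \<alpha>) * of_nat t * T \<alpha> \<alpha>" using \<open>\<alpha> \<in> I\<close> unfolding I_def by simp
  qed
  finally have eq: "(\<Sum>\<gamma>\<in>\<Gamma>. Tform g \<Gamma> (dil h1 \<gamma>) (dil h2 \<gamma>)) = (\<Sum>\<alpha>\<in>I. A \<alpha> * cnj (B \<alpha>) * of_nat t * T \<alpha> \<alpha>)" .
  have ne: "\<Gamma> \<noteq> {}" using tpos unfolding t_def by auto
  show ?thesis unfolding eq
    using tpos ne by (simp add: sum_distrib_left I_def t_def A_def B_def T_def Tform_def f_def mult_ac)
qed


end
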